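(* Let $1\le p<\infty$ and let $(X,\mathcal B,\mu,f)$ be a dissipative system of bounded distortion generated by $W$. There exists $L\in\mathbb R$ such that for all $n,k\in\mathbb Z$ and all $\varphi\in L^p(X)$, \[ \frac1L\,\frac{\mu(f^k(W))}{\mu(f^{k+n}(W))}\int_{f^{k+n}(W)}|\varphi|^p\,d\mu\le\int_{f^k(W)}|\varphi|^p\circ f^n\,d\mu\le L\,\frac{\mu(f^k(W))}{\mu(f^{k+n}(W))}\int_{f^{k+n}(W)}|\varphi|^p\,d\mu. \]
   Context: $(X,\mathcal B,\mu)$ is $\sigma$-finite, $f:X\to X$ is bimeasurable invertible with Radon–Nikodym derivatives of $\mu\circ f$ and $\mu\circ f^{-1}$ w.r.t. $\mu$ bounded below. Dissipative generated by $W$: $W\in\mathcal B$, $0<\mu(W)<\infty$, $X=\dot\bigcup_{k\in\mathbb Z}f^k(W)$ (pairwise disjoint). Bounded distortion: there is $K>0$ with $\frac1K\frac{\mu(f^k(W))}{\mu(W)}\le\frac{\mu(f^k(B))}{\mu(B)}\le K\frac{\mu(f^k(W))}{\mu(W)}$ for all $k\in\mathbb Z$ and measurable $B\subseteq W$ with $\mu(B)>0$. *)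

theory Defs
  imports "HOL-Probability.Probability"
begin

definition ipow :: "('a \<Rightarrow> 'a) \<Rightarrow> ('a \<Rightarrow> 'a) \<Rightarrow> int \<Rightarrow> 'a \<Rightarrow> 'a" where
  "ipow f g k = (if 0 \<le> k then f ^^ nat k else g ^^ nat (- k))"

end

theory Submission imports Defs begin

locale sys =
  fixes M :: "'a measure" and f g :: "'a \<Rightarrow> 'a"
  assumes f_meas: "f \<in> measurable M M" and g_meas: "g \<in> measurable M M"
    and gf: "\<And>x. x \<in> space M \<Longrightarrow> g (f x) = x"
    and fg: "\<And>x. x \<in> space M \<Longrightarrow> f (g x) = x"
begin

abbreviation "P \<equiv> ipow f g"

lemma funpow_space: "h \<in> measurable M M \<Longrightarrow> x \<in> space M \<Longrightarrow> (h ^^ m) x \<in> space M"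
  by (induction m) (auto simp: measurable_space)

lemma funpow_meas: "h \<in> measurable M M \<Longrightarrow> (h ^^ m) \<in> measurable M M"
  by (induction m) auto

lemma P_space: "x \<in> space M \<Longrightarrow> P j x \<in> space M"
  unfolding ipow_def using funpow_space f_meas g_meas by auto

lemma P_meas: "P j \<in> measurable M M"
  unfolding ipow_def using funpow_meas f_meas g_meas by auto

lemma P0: "P 0 x = x" by (simp add: ipow_def)

lemma P_succ: "x \<in> space M \<Longrightarrow> P (j+1) x = f (P j x)"
proof (cases "0 \<le> j")
  case True
  then have "nat (j+1) = Suc (nat j)" by simp
  then show ?thesis using True by (simp add: ipow_def)
next
  case False
  then have e: "nat (-j) = Suc (nat (-(j+1)))" by simp
  assume x: "x \<in> space M"
  have "P j x = g ((g ^^ nat (-(j+1))) x)" using False e by (simp add: ipow_def)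
  moreover have "P (j+1) x = (g ^^ nat (-(j+1))) x" using False by (simp add: ipow_def)
  ultimately show ?thesis using fg funpow_space[OF g_meas x] by simp
qed

lemma P_pred: "x \<in> space M \<Longrightarrow> P (j-1) x = g (P j x)"
  using P_succ[of x "j-1"] gf P_space by auto

lemma P_comp: "x \<in> space M \<Longrightarrow> P i (P j x) = P (i+j) x"
proof (induction i rule: int_induct[where k=0])
  case base then show ?case by (simp add: P0)
next
  case (step1 i)
  then have "P (i + 1) (P j x) = f (P i (P j x))" using P_succ P_space by blast
  also have "\<dots> = f (P (i+j) x)" using step1 by simp
  also have "\<dots> = P (i+j+1) x" using P_succ step1 by simp
  finally show ?case by (simp add: algebra_simps)
next
  case (step2 i)
  then have "P (i - 1) (P j x) = g (P i (P j x))" using P_pred P_space by blast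
  also have "\<dots> = g (P (i+j) x)" using step2 by simp
  also have "\<dots> = P (i+j-1) x" using P_pred step2 by simp
  finally show ?case by (simp add: algebra_simps)
qed

lemma P_img: assumes S: "S \<subseteq> space M" shows "P j ` S = {y \<in> space M. P (-j) y \<in> S}"
proof (intro equalityI subsetI)
  fix y assume "y \<in> P j ` S"
  then obtain x where x: "x \<in> S" "y = P j x" by blast
  then have xs: "x \<in> space M" using S by blast
  have "P (-j) (P j x) = x" using P_comp[OF xs, of "-j" j] P0 by simp
  then show "y \<in> {y \<in> space M. P (-j) y \<in> S}" using x P_space[OF xs, of j] by simp
next
  fix y assume "y \<in> {y \<in> space M. P (-j) y \<in> S}"
  then have y: "y \<in> space M" "P (-j) y \<in> S" by auto
  have "P j (P (-j) y) = y" using P_comp[OF y(1), of j "-j"] P0 by simp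
  then show "y \<in> P j ` S" using y(2) by (metis rev_image_eqI)
qed

lemma P_img_sets: "S \<in> sets M \<Longrightarrow> P j ` S \<in> sets M"
proof -
  assume S: "S \<in> sets M"
  then have "P j ` S = P (-j) -` S \<inter> space M" using P_img[OF sets.sets_into_space[OF S]] by auto
  then show ?thesis using P_meas S by (metis measurable_sets)
qed

lemma P_img_comp: assumes "S \<subseteq> space M" shows "P i ` P j ` S = P (i+j) ` S"
proof -
  have "P i ` P j ` S = (\<lambda>x. P i (P j x)) ` S" by (simp add: image_image)
  also have "\<dots> = P (i+j) ` S" using assms P_comp by (intro image_cong) auto
  finally show ?thesis .
qed

lemma P_img_space: "S \<subseteq> space M \<Longrightarrow> P j ` S \<subseteq> space M"
  using P_space by auto

lemma P1: "P 1 x = f x" by (simp add: ipow_def)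
lemma Pm1: "P (-1) x = g x" by (simp add: ipow_def)

lemma P_img0: "P 0 ` S = S" by (simp add: P0)

end

lemma rn_lower:
  assumes "sigma_finite_measure M" "absolutely_continuous M N" "sets N = sets M"
    "AE x in M. ennreal c \<le> RN_deriv M N x" "A \<in> sets M"
  shows "ennreal c * emeasure M A \<le> emeasure N A"
proof -
  have "N = density M (RN_deriv M N)"
    using sigma_finite_measure.density_RN_deriv[OF assms(1-3)] by simp
  then have "emeasure N A = (\<integral>\<^sup>+ x. RN_deriv M N x * indicator A x \<partial>M)"
    using assms(5) emeasure_density[OF borel_measurable_RN_deriv[of M N] assms(5)] by simp
  also have "\<dots> \<ge> (\<integral>\<^sup>+ x. ennreal c * indicator A x \<partial>M)"
    using assms(4) by (intro nn_integral_mono_AE) (auto split: split_indicator)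
  finally show ?thesis using nn_integral_cmult_indicator[OF assms(5)] by simp
qed

lemma nn_cmp:
  assumes "sets N1 = sets M" "sets N2 = sets M" "\<And>C. C \<in> sets M \<Longrightarrow> emeasure N1 C \<le> emeasure N2 C"
  shows "nn_integral N1 h \<le> nn_integral N2 h"
proof (rule nn_integral_mono_measure)
  show "sets N1 = sets N2" using assms by simp
  have "space N1 = space N2" using assms(1,2) sets_eq_imp_space_eq by blast
  moreover have "emeasure N1 \<le> emeasure N2"
  proof (rule le_funI)
    fix C show "emeasure N1 C \<le> emeasure N2 C"
    proof (cases "C \<in> sets M")
      case True then show ?thesis using assms(3) by blast
    next
      case False then show ?thesis using assms(1) emeasure_notin_sets[of C N1] by simp
    qed
  qed
  ultimately show "N1 \<le> N2" using assms by (simp add: le_measure_iff)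
qed


locale sys2 = sys +
  fixes c1 c2 :: real
  assumes sf: "sigma_finite_measure M"
    and ac_f: "absolutely_continuous M (distr M M g)"
    and ac_finv: "absolutely_continuous M (distr M M f)"
    and c1: "c1 > 0" "AE x in M. ennreal c1 \<le> RN_deriv M (distr M M g) x"
    and c2: "c2 > 0" "AE x in M. ennreal c2 \<le> RN_deriv M (distr M M f) x"
begin

lemma low_f: "S \<in> sets M \<Longrightarrow> ennreal c1 * emeasure M S \<le> emeasure M (P 1 ` S)"
proof -
  assume S: "S \<in> sets M"
  have "ennreal c1 * emeasure M S \<le> emeasure (distr M M g) S"
    by (rule rn_lower[OF sf ac_f _ c1(2) S]) simp
  also have "emeasure (distr M M g) S = emeasure M (g -` S \<inter> space M)"
    using emeasure_distr[OF g_meas S] .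
  also have "g -` S \<inter> space M = P 1 ` S"
    using P_img[OF sets.sets_into_space[OF S], of 1] by (auto simp: Pm1)
  finally show ?thesis .
qed

lemma low_g: "S \<in> sets M \<Longrightarrow> ennreal c2 * emeasure M S \<le> emeasure M (P (-1) ` S)"
proof -
  assume S: "S \<in> sets M"
  have "ennreal c2 * emeasure M S \<le> emeasure (distr M M f) S"
    by (rule rn_lower[OF sf ac_finv _ c2(2) S]) simp
  also have "emeasure (distr M M f) S = emeasure M (f -` S \<inter> space M)"
    using emeasure_distr[OF f_meas S] .
  also have "f -` S \<inter> space M = P (-1) ` S"
    using P_img[OF sets.sets_into_space[OF S], of "-1"] by (auto simp: P1)
  finally show ?thesis .
qed

lemma up_f: "S \<in> sets M \<Longrightarrow> emeasure M (P 1 ` S) \<le> ennreal (1/c2) * emeasure M S"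
proof -
  assume S: "S \<in> sets M"
  have "ennreal c2 * emeasure M (P 1 ` S) \<le> emeasure M (P (-1) ` P 1 ` S)"
    using low_g[OF P_img_sets[OF S]] .
  also have "P (-1) ` P 1 ` S = S"
    using P_img_comp[OF sets.sets_into_space[OF S]] P_img0 by simp
  finally have "ennreal (1/c2) * (ennreal c2 * emeasure M (P 1 ` S)) \<le> ennreal (1/c2) * emeasure M S"
    by (rule mult_left_mono) simp
  moreover have "ennreal (1/c2) * ennreal c2 = 1"
    using c2(1) by (simp add: ennreal_mult[symmetric])
  ultimately show ?thesis by (simp add: mult.assoc[symmetric])
qed

lemma up_g: "S \<in> sets M \<Longrightarrow> emeasure M (P (-1) ` S) \<le> ennreal (1/c1) * emeasure M S"
proof -
  assume S: "S \<in> sets M"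
  have "ennreal c1 * emeasure M (P (-1) ` S) \<le> emeasure M (P 1 ` P (-1) ` S)"
    using low_f[OF P_img_sets[OF S]] .
  also have "P 1 ` P (-1) ` S = S"
    using P_img_comp[OF sets.sets_into_space[OF S]] P_img0 by simp
  finally have "ennreal (1/c1) * (ennreal c1 * emeasure M (P (-1) ` S)) \<le> ennreal (1/c1) * emeasure M S"
    by (rule mult_left_mono) simp
  moreover have "ennreal (1/c1) * ennreal c1 = 1"
    using c1(1) by (simp add: ennreal_mult[symmetric])
  ultimately show ?thesis by (simp add: mult.assoc[symmetric])
qed

lemma null_fin: "S \<in> sets M \<Longrightarrow> (emeasure M S = 0 \<longrightarrow> emeasure M (P j ` S) = 0)
   \<and> (emeasure M S < \<infinity> \<longrightarrow> emeasure M (P j ` S) < \<infinity>)"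
proof (induction j rule: int_induct[where k=0])
  case base then show ?case by (simp add: P_img0)
next
  case (step1 i)
  have T: "P i ` S \<in> sets M" using P_img_sets step1 by blast
  have e: "P (i+1) ` S = P 1 ` P i ` S"
    using P_img_comp[OF sets.sets_into_space[OF step1(3)]] by (simp add: add.commute)
  have le: "emeasure M (P (i+1) ` S) \<le> ennreal (1/c2) * emeasure M (P i ` S)"
    unfolding e by (rule up_f[OF T])
  moreover have "emeasure M (P i ` S) < \<infinity> \<Longrightarrow> ennreal (1/c2) * emeasure M (P i ` S) < \<infinity>"
    by (simp add: ennreal_mult_less_top)
  ultimately show ?case using step1 by (auto dest: le_less_trans)
next
  case (step2 i)
  have T: "P i ` S \<in> sets M" using P_img_sets step2 by blast
  have e: "P (i-1) ` S = P (-1) ` P i ` S"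
    using P_img_comp[OF sets.sets_into_space[OF step2(3)]] by simp
  have le: "emeasure M (P (i-1) ` S) \<le> ennreal (1/c1) * emeasure M (P i ` S)"
    unfolding e by (rule up_g[OF T])
  moreover have "emeasure M (P i ` S) < \<infinity> \<Longrightarrow> ennreal (1/c1) * emeasure M (P i ` S) < \<infinity>"
    by (simp add: ennreal_mult_less_top)
  ultimately show ?case using step2 by (auto dest: le_less_trans)
qed

lemma pos: "S \<in> sets M \<Longrightarrow> emeasure M S > 0 \<Longrightarrow> emeasure M (P j ` S) > 0"
proof (rule ccontr)
  assume S: "S \<in> sets M" "emeasure M S > 0" "\<not> emeasure M (P j ` S) > 0"
  then have "emeasure M (P j ` S) = 0" by simp
  then have "emeasure M (P (-j) ` P j ` S) = 0" using null_fin[OF P_img_sets[OF S(1)]] by blast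
  moreover have "P (-j) ` P j ` S = S"
    using P_img_comp[OF sets.sets_into_space[OF S(1)]] P_img0 by simp
  ultimately show False using S by simp
qed

end

lemma ratio_up:
  fixes K ak akn w b xk xkn :: real
  assumes "K>0" "ak>0" "akn>0" "w>0" "b>0"
    and h2: "xk/b \<le> K*(ak/w)" and h3: "(1/K)*(akn/w) \<le> xkn/b"
  shows "xk \<le> K^2*(ak/akn)*xkn"
proof -
  have a: "xk*w \<le> K*ak*b" using h2 assms by (simp add: field_simps)
  have c: "akn*b \<le> K*xkn*w" using h3 assms by (simp add: field_simps)
  have "xk*w*akn \<le> K*ak*b*akn" using a assms by (simp add: mult_right_mono)
  also have "\<dots> = (K*ak)*(akn*b)" by simp
  also have "\<dots> \<le> (K*ak)*(K*xkn*w)" using c assms by (intro mult_left_mono) auto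
  finally have "(xk*akn)*w \<le> (K^2*ak*xkn)*w" by (simp add: power2_eq_square algebra_simps)
  then have "xk*akn \<le> K^2*ak*xkn" using assms by simp
  then show ?thesis using assms by (simp add: field_simps)
qed

lemma ratio_low:
  fixes K ak akn w b xk xkn :: real
  assumes "K>0" "ak>0" "akn>0" "w>0" "b>0"
    and h1: "(1/K)*(ak/w) \<le> xk/b" and h4: "xkn/b \<le> K*(akn/w)"
  shows "(1/K^2)*(ak/akn)*xkn \<le> xk"
proof -
  have a: "ak*b \<le> K*xk*w" using h1 assms by (simp add: field_simps)
  have c: "xkn*w \<le> K*akn*b" using h4 assms by (simp add: field_simps)
  have "ak*xkn*w = ak*(xkn*w)" by simp
  also have "\<dots> \<le> ak*(K*akn*b)" using c assms by (intro mult_left_mono) auto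
  also have "\<dots> = (K*akn)*(ak*b)" by simp
  also have "\<dots> \<le> (K*akn)*(K*xk*w)" using a assms by (intro mult_left_mono) auto
  finally have "(ak*xkn)*w \<le> (K^2*akn*xk)*w" by (simp add: power2_eq_square algebra_simps)
  then have "ak*xkn \<le> K^2*akn*xk" using assms by simp
  then show ?thesis using assms by (simp add: field_simps)
qed

lemma dens_int:
  assumes h: "h \<in> borel_measurable M" and D: "D \<in> sets M"
  shows "integral\<^sup>N (density M (\<lambda>x. a * indicator D x)) h = a * (\<integral>\<^sup>+ x \<in> D. h x \<partial>M)"
proof -
  have "integral\<^sup>N (density M (\<lambda>x. a * indicator D x)) h = (\<integral>\<^sup>+ x. (a * indicator D x) * h x \<partial>M)"
    using h D by (intro nn_integral_density) auto
  also have "\<dots> = (\<integral>\<^sup>+ x. a * (h x * indicator D x) \<partial>M)" by (simp add: ac_simps)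
  also have "\<dots> = a * (\<integral>\<^sup>+ x \<in> D. h x \<partial>M)" using h D by (intro nn_integral_cmult) auto
  finally show ?thesis .
qed

lemma dens_meas:
  assumes D: "D \<in> sets M" and C: "C \<in> sets M"
  shows "emeasure (density M (\<lambda>x. a * indicator D x)) C = a * emeasure M (C \<inter> D)"
proof -
  have "emeasure (density M (\<lambda>x. a * indicator D x)) C = (\<integral>\<^sup>+ x. (a * indicator D x) * indicator C x \<partial>M)"
    using D C by (intro emeasure_density) auto
  also have "\<dots> = (\<integral>\<^sup>+ x. a * indicator (C \<inter> D) x \<partial>M)"
    by (intro nn_integral_cong) (auto split: split_indicator)
  also have "\<dots> = a * emeasure M (C \<inter> D)" using C D by (intro nn_integral_cmult_indicator) auto
  finally show ?thesis .
qed

lemma distr_int: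
  assumes h: "h \<in> borel_measurable M" and A: "A \<in> sets M" and T: "T \<in> measurable M M"
  shows "(\<integral>\<^sup>+ x \<in> A. h (T x) \<partial>M) = integral\<^sup>N (distr (density M (indicator A)) M T) h"
    and "C \<in> sets M \<Longrightarrow> emeasure (distr (density M (indicator A)) M T) C = emeasure M ({x \<in> space M. T x \<in> C} \<inter> A)"
proof -
  have T': "T \<in> measurable (density M (indicator A)) M" using T by simp
  have "integral\<^sup>N (distr (density M (indicator A)) M T) h = integral\<^sup>N (density M (indicator A)) (\<lambda>x. h (T x))"
    using T' h by (intro nn_integral_distr) auto
  also have "\<dots> = (\<integral>\<^sup>+ x. indicator A x * h (T x) \<partial>M)"
    using h A T by (intro nn_integral_density) auto
  also have "\<dots> = (\<integral>\<^sup>+ x \<in> A. h (T x) \<partial>M)" by (simp add: ac_simps)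
  finally show "(\<integral>\<^sup>+ x \<in> A. h (T x) \<partial>M) = integral\<^sup>N (distr (density M (indicator A)) M T) h" by simp
next
  assume C: "C \<in> sets M"
  have T': "T \<in> measurable (density M (indicator A)) M" using T by simp
  have S: "T -` C \<inter> space M \<in> sets M" using T C by (rule measurable_sets)
  have "emeasure (distr (density M (indicator A)) M T) C = emeasure (density M (indicator A)) (T -` C \<inter> space M)"
    using emeasure_distr[OF T' C] by simp
  also have "\<dots> = (\<integral>\<^sup>+ x. indicator A x * indicator (T -` C \<inter> space M) x \<partial>M)"
    using A S by (intro emeasure_density) auto
  also have "\<dots> = (\<integral>\<^sup>+ x. indicator ({x \<in> space M. T x \<in> C} \<inter> A) x \<partial>M)"
    by (intro nn_integral_cong) (auto split: split_indicator)
  also have "\<dots> = emeasure M ({x \<in> space M. T x \<in> C} \<inter> A)"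
  proof (rule nn_integral_indicator)
    have "{x \<in> space M. T x \<in> C} \<inter> A = (T -` C \<inter> space M) \<inter> A" by auto
    then show "{x \<in> space M. T x \<in> C} \<inter> A \<in> sets M" using S A by auto
  qed
  finally show "emeasure (distr (density M (indicator A)) M T) C = emeasure M ({x \<in> space M. T x \<in> C} \<inter> A)" .
qed

lemma ennr1: "0 < q \<Longrightarrow> 0 \<le> r \<Longrightarrow> 0 \<le> c \<Longrightarrow> ennreal c * (ennreal r / ennreal q) = ennreal (c*(r/q))"
proof -
  assume a: "0 < q" "0 \<le> r" "0 \<le> c"
  have "ennreal r / ennreal q = ennreal (r/q)" using a by (intro divide_ennreal) auto
  moreover have "ennreal c * ennreal (r/q) = ennreal (c*(r/q))" using a by (intro ennreal_mult[symmetric]) auto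
  ultimately show ?thesis by simp
qed

lemma ennr2: "0 < q \<Longrightarrow> 0 \<le> r \<Longrightarrow> 0 \<le> c \<Longrightarrow> 0 \<le> z \<Longrightarrow>
   ennreal c * (ennreal r / ennreal q) * ennreal z = ennreal (c*(r/q)*z)"
proof -
  assume a: "0 < q" "0 \<le> r" "0 \<le> c" "0 \<le> z"
  have "ennreal c * (ennreal r / ennreal q) = ennreal (c*(r/q))" using a by (intro ennr1) auto
  moreover have "ennreal (c*(r/q)) * ennreal z = ennreal (c*(r/q)*z)" using a by (intro ennreal_mult[symmetric]) auto
  ultimately show ?thesis by simp
qed

locale sys3 = sys2 +
  fixes W :: "'a set" and K :: real
  assumes W: "W \<in> sets M" "0 < emeasure M W" "emeasure M W < \<infinity>"
    and K: "K > 0"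
    and bd: "\<forall>(k::int) B. B \<in> sets M \<longrightarrow> B \<subseteq> W \<longrightarrow> 0 < emeasure M B \<longrightarrow>
               ennreal (1 / K) * (emeasure M (ipow f g k ` W) / emeasure M W)
                 \<le> emeasure M (ipow f g k ` B) / emeasure M B
             \<and> emeasure M (ipow f g k ` B) / emeasure M B
                 \<le> ennreal K * (emeasure M (ipow f g k ` W) / emeasure M W)"
begin

lemma fin: "S \<in> sets M \<Longrightarrow> S \<subseteq> W \<Longrightarrow> emeasure M (P j ` S) < \<infinity>"
proof -
  assume S: "S \<in> sets M" "S \<subseteq> W"
  have "emeasure M S \<le> emeasure M W" using emeasure_mono[OF S(2) W(1)] .
  then have "emeasure M S < \<infinity>" using W(3) by (auto dest: le_less_trans)
  then show ?thesis using null_fin[OF S(1)] by blast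
qed

lemma realize: "S \<in> sets M \<Longrightarrow> S \<subseteq> W \<Longrightarrow> emeasure M (P j ` S) = ennreal (measure M (P j ` S))"
proof -
  assume S: "S \<in> sets M" "S \<subseteq> W"
  have "emeasure M (P j ` S) \<noteq> \<top>" using fin[OF S, of j] by (simp add: less_top)
  then show ?thesis by (rule emeasure_eq_ennreal_measure)
qed

lemma bd_real:
  assumes B: "B \<in> sets M" "B \<subseteq> W" "0 < emeasure M B"
  shows "(1/K) * (measure M (P j ` W) / measure M W) \<le> measure M (P j ` B) / measure M B
     \<and> measure M (P j ` B) / measure M B \<le> K * (measure M (P j ` W) / measure M W)"
proof -
  have W0: "W = P 0 ` W" "B = P 0 ` B" by (simp_all add: P_img0)
  have eW: "emeasure M W = ennreal (measure M W)" using realize[OF W(1) order_refl, of 0] W0 by simp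
  have eB: "emeasure M B = ennreal (measure M B)" using realize[OF B(1,2), of 0] W0 by simp
  have ejW: "emeasure M (P j ` W) = ennreal (measure M (P j ` W))" using realize[OF W(1) order_refl] .
  have ejB: "emeasure M (P j ` B) = ennreal (measure M (P j ` B))" using realize[OF B(1,2)] .
  have wpos: "measure M W > 0" using W(2) eW by simp
  have bpos: "measure M B > 0" using B(3) eB by simp
  define aj w b xj where "aj = measure M (P j ` W)" and "w = measure M W" and "b = measure M B"
    and "xj = measure M (P j ` B)"
  have nn: "aj \<ge> 0" "xj \<ge> 0" unfolding aj_def xj_def by auto
  have "ennreal (1 / K) * (emeasure M (P j ` W) / emeasure M W)
                 \<le> emeasure M (P j ` B) / emeasure M B
             \<and> emeasure M (P j ` B) / emeasure M B
                 \<le> ennreal K * (emeasure M (P j ` W) / emeasure M W)" using bd B by blast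
  then have h: "ennreal (1 / K) * (ennreal aj / ennreal w) \<le> ennreal xj / ennreal b"
    "ennreal xj / ennreal b \<le> ennreal K * (ennreal aj / ennreal w)"
    unfolding aj_def w_def b_def xj_def by (simp_all only: eW eB ejW ejB)
  have wp: "w > 0" and bp: "b > 0" using wpos bpos unfolding w_def b_def .
  have e1: "ennreal (1 / K) * (ennreal aj / ennreal w) = ennreal ((1 / K) * (aj / w))"
    using wp nn K by (intro ennr1) auto
  have e2: "ennreal K * (ennreal aj / ennreal w) = ennreal (K * (aj / w))"
    using wp nn K by (intro ennr1) auto
  have e3: "ennreal xj / ennreal b = ennreal (xj / b)" using bp nn by (intro divide_ennreal) auto
  have h1: "ennreal ((1 / K) * (aj / w)) \<le> ennreal (xj / b)" using h(1) e1 e3 by simp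
  have h2: "ennreal (xj / b) \<le> ennreal (K * (aj / w))" using h(2) e2 e3 by simp
  have "(1 / K) * (aj / w) \<le> xj / b" using h1 bp nn by (subst (asm) ennreal_le_iff) auto
  moreover have "xj / b \<le> K * (aj / w)" using h2 wp K nn by (subst (asm) ennreal_le_iff) auto
  ultimately show ?thesis unfolding aj_def w_def b_def xj_def by simp
qed

lemma set_ineq:
  assumes C: "C \<in> sets M"
  shows "emeasure M ({x \<in> space M. P n x \<in> C} \<inter> P k ` W)
           \<le> ennreal (K^2) * (emeasure M (P k ` W) / emeasure M (P (k+n) ` W)) * emeasure M (C \<inter> P (k+n) ` W)
       \<and> ennreal (1/K^2) * (emeasure M (P k ` W) / emeasure M (P (k+n) ` W)) * emeasure M (C \<inter> P (k+n) ` W)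
           \<le> emeasure M ({x \<in> space M. P n x \<in> C} \<inter> P k ` W)"
proof -
  have Ws: "W \<subseteq> space M" using W(1) sets.sets_into_space by blast
  define D where "D = P (k+n) ` W"
  define E where "E = C \<inter> D"
  define B where "B = P (-(k+n)) ` E"
  have Ds: "D \<in> sets M" unfolding D_def using P_img_sets W(1) by blast
  have Es: "E \<in> sets M" unfolding E_def using Ds C by blast
  have Esp: "E \<subseteq> space M" using Es sets.sets_into_space by blast
  have Bs: "B \<in> sets M" unfolding B_def using P_img_sets Es by blast
  have "B \<subseteq> P (-(k+n)) ` D" unfolding B_def E_def by blast
  also have "\<dots> = W" unfolding D_def using P_img_comp[OF Ws, of "-(k+n)" "k+n"] P_img0 by simp
  finally have BW: "B \<subseteq> W" .
  have hkn: "P (k+n) ` B = E" unfolding B_def using P_img_comp[OF Esp, of "k+n" "-(k+n)"] P_img0 by simp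
  have hk: "P k ` B = P (-n) ` E" unfolding B_def using P_img_comp[OF Esp, of k "-(k+n)"] by simp
  have hset: "{x \<in> space M. P n x \<in> C} \<inter> P k ` W = P (-n) ` E"
  proof -
    have e1: "P (-n) ` E = {y \<in> space M. P n y \<in> E}" using P_img[OF Esp, of "-n"] by simp
    have e2: "P k ` W = {y \<in> space M. P (-k) y \<in> W}" using P_img[OF Ws] .
    have e3: "D = {y \<in> space M. P (-(k+n)) y \<in> W}" unfolding D_def using P_img[OF Ws] .
    have e4: "y \<in> space M \<Longrightarrow> P (-(k+n)) (P n y) = P (-k) y" for y using P_comp[of y "-(k+n)" n] by simp
    show ?thesis unfolding e1 e2 unfolding E_def e3 using e4 P_space by auto
  qed
  have W0: "W = P 0 ` W" by (simp add: P_img0)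
  define ak akn w b xk xkn where "ak = measure M (P k ` W)" and "akn = measure M (P (k+n) ` W)"
    and "w = measure M W" and "b = measure M B" and "xk = measure M (P k ` B)" and "xkn = measure M (P (k+n) ` B)"
  have eak: "emeasure M (P k ` W) = ennreal ak" unfolding ak_def using realize[OF W(1) order_refl] .
  have eakn: "emeasure M (P (k+n) ` W) = ennreal akn" unfolding akn_def using realize[OF W(1) order_refl] .
  have exk: "emeasure M (P k ` B) = ennreal xk" unfolding xk_def using realize[OF Bs BW] .
  have exkn: "emeasure M (P (k+n) ` B) = ennreal xkn" unfolding xkn_def using realize[OF Bs BW] .
  have akp: "ak > 0" using pos[OF W(1,2), of k] eak by simp
  have aknp: "akn > 0" using pos[OF W(1,2), of "k+n"] eakn by simp
  have nn: "xk \<ge> 0" "xkn \<ge> 0" "K^2 \<ge> 0" "1/K^2 \<ge> 0" unfolding xk_def xkn_def by auto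
  have L: "emeasure M ({x \<in> space M. P n x \<in> C} \<inter> P k ` W) = ennreal xk"
    using hset hk exk by simp
  have R: "emeasure M (C \<inter> P (k+n) ` W) = ennreal xkn" using hkn exkn unfolding E_def D_def by simp
  have R1: "ennreal (K^2) * (emeasure M (P k ` W) / emeasure M (P (k+n) ` W)) * emeasure M (C \<inter> P (k+n) ` W)
     = ennreal (K^2 * (ak/akn) * xkn)" unfolding R eak eakn using aknp akp nn by (intro ennr2) auto
  have R2: "ennreal (1/K^2) * (emeasure M (P k ` W) / emeasure M (P (k+n) ` W)) * emeasure M (C \<inter> P (k+n) ` W)
     = ennreal (1/K^2 * (ak/akn) * xkn)" unfolding R eak eakn using aknp akp nn by (intro ennr2) auto
  show ?thesis
  proof (cases "emeasure M B = 0")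
    case True
    then have "emeasure M (P k ` B) = 0" "emeasure M (P (k+n) ` B) = 0" using null_fin[OF Bs] by blast+
    then have "xk = 0" "xkn = 0" using exk exkn nn(1,2) by simp_all
    then show ?thesis unfolding L R1 R2 by simp
  next
    case False
    then have Bp: "0 < emeasure M B" by (simp add: zero_less_iff_neq_zero)
    have wp: "w > 0" unfolding w_def using W(2) realize[OF W(1) order_refl, of 0] W0 by simp
    have bp: "b > 0" unfolding b_def using Bp realize[OF Bs BW, of 0] P_img0 by simp
    have bk: "(1/K) * (ak / w) \<le> xk / b \<and> xk / b \<le> K * (ak / w)"
      using bd_real[OF Bs BW Bp, of k] unfolding ak_def w_def xk_def b_def .
    have bkn: "(1/K) * (akn / w) \<le> xkn / b \<and> xkn / b \<le> K * (akn / w)"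
      using bd_real[OF Bs BW Bp, of "k+n"] unfolding akn_def w_def xkn_def b_def .
    have "xk \<le> K^2*(ak/akn)*xkn" using ratio_up[OF K akp aknp wp bp] bk bkn by blast
    moreover have "(1/K^2)*(ak/akn)*xkn \<le> xk" using ratio_low[OF K akp aknp wp bp] bk bkn by blast
    ultimately show ?thesis unfolding L R1 R2 by (simp add: ennreal_leI)
  qed
qed

lemma int_ineq:
  assumes h: "h \<in> borel_measurable M"
  shows "ennreal (1/K^2) * (emeasure M (P k ` W) / emeasure M (P (k+n) ` W)) * (\<integral>\<^sup>+ x \<in> P (k+n) ` W. h x \<partial>M)
           \<le> (\<integral>\<^sup>+ x \<in> P k ` W. h (P n x) \<partial>M)
       \<and> (\<integral>\<^sup>+ x \<in> P k ` W. h (P n x) \<partial>M)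
           \<le> ennreal (K^2) * (emeasure M (P k ` W) / emeasure M (P (k+n) ` W)) * (\<integral>\<^sup>+ x \<in> P (k+n) ` W. h x \<partial>M)"
proof -
  define A D where "A = P k ` W" and "D = P (k+n) ` W"
  have As: "A \<in> sets M" and Ds: "D \<in> sets M" unfolding A_def D_def using P_img_sets W(1) by blast+
  define c where "c = emeasure M A / emeasure M D"
  define N1 where "N1 = distr (density M (indicator A)) M (P n)"
  have i1: "(\<integral>\<^sup>+ x \<in> A. h (P n x) \<partial>M) = integral\<^sup>N N1 h"
    unfolding N1_def by (rule distr_int(1)[OF h As P_meas])
  have m1: "C \<in> sets M \<Longrightarrow> emeasure N1 C = emeasure M ({x \<in> space M. P n x \<in> C} \<inter> A)" for C
    unfolding N1_def by (rule distr_int(2)[OF h As P_meas])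
  have sN1: "sets N1 = sets M" unfolding N1_def by simp
  have up: "integral\<^sup>N N1 h \<le> integral\<^sup>N (density M (\<lambda>x. (ennreal (K^2) * c) * indicator D x)) h"
  proof (rule nn_cmp[OF sN1])
    show "sets (density M (\<lambda>x. (ennreal (K^2) * c) * indicator D x)) = sets M" by simp
    fix C assume C: "C \<in> sets M"
    show "emeasure N1 C \<le> emeasure (density M (\<lambda>x. (ennreal (K^2) * c) * indicator D x)) C"
      using m1[OF C] dens_meas[OF Ds C, of "ennreal (K^2) * c"] set_ineq[OF C, of n k]
      by (simp add: c_def A_def D_def)
  qed
  have low: "integral\<^sup>N (density M (\<lambda>x. (ennreal (1/K^2) * c) * indicator D x)) h \<le> integral\<^sup>N N1 h"
  proof (rule nn_cmp[OF _ sN1])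
    show "sets (density M (\<lambda>x. (ennreal (1/K^2) * c) * indicator D x)) = sets M" by simp
    fix C assume C: "C \<in> sets M"
    show "emeasure (density M (\<lambda>x. (ennreal (1/K^2) * c) * indicator D x)) C \<le> emeasure N1 C"
      using m1[OF C] dens_meas[OF Ds C, of "ennreal (1/K^2) * c"] set_ineq[OF C, of n k]
      by (simp add: c_def A_def D_def)
  qed
  have e1: "integral\<^sup>N (density M (\<lambda>x. (ennreal (K^2) * c) * indicator D x)) h
     = ennreal (K^2) * c * (\<integral>\<^sup>+ x \<in> D. h x \<partial>M)" by (rule dens_int[OF h Ds])
  have e2: "integral\<^sup>N (density M (\<lambda>x. (ennreal (1/K^2) * c) * indicator D x)) h
     = ennreal (1/K^2) * c * (\<integral>\<^sup>+ x \<in> D. h x \<partial>M)" by (rule dens_int[OF h Ds])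
  have "ennreal (1/K^2) * c * (\<integral>\<^sup>+ x \<in> D. h x \<partial>M) \<le> (\<integral>\<^sup>+ x \<in> A. h (P n x) \<partial>M)
     \<and> (\<integral>\<^sup>+ x \<in> A. h (P n x) \<partial>M) \<le> ennreal (K^2) * c * (\<integral>\<^sup>+ x \<in> D. h x \<partial>M)"
    using up low unfolding i1[symmetric] e1 e2 by simp
  then show ?thesis unfolding c_def A_def D_def .
qed

end

theorem lemma4p1:
  fixes M :: "'a measure" and f g :: "'a \<Rightarrow> 'a" and W :: "'a set" and p :: real
  assumes p: "1 \<le> p"
    and sf: "sigma_finite_measure M"
    and f_meas: "f \<in> measurable M M" and g_meas: "g \<in> measurable M M"
    and gf: "\<And>x. x \<in> space M \<Longrightarrow> g (f x) = x"
    and fg: "\<And>x. x \<in> space M \<Longrightarrow> f (g x) = x"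
    and ac_f: "absolutely_continuous M (distr M M g)"
    and ac_finv: "absolutely_continuous M (distr M M f)"
    and rn_f: "\<exists>c>0. AE x in M. ennreal c \<le> RN_deriv M (distr M M g) x"
    and rn_finv: "\<exists>c>0. AE x in M. ennreal c \<le> RN_deriv M (distr M M f) x"
    and W: "W \<in> sets M" "0 < emeasure M W" "emeasure M W < \<infinity>"
    and cover: "space M = (\<Union>k::int. ipow f g k ` W)"
    and disj: "\<And>j k::int. j \<noteq> k \<Longrightarrow> ipow f g j ` W \<inter> ipow f g k ` W = {}"
    and bd: "\<exists>K>0. \<forall>(k::int) B. B \<in> sets M \<longrightarrow> B \<subseteq> W \<longrightarrow> 0 < emeasure M B \<longrightarrow>
               ennreal (1 / K) * (emeasure M (ipow f g k ` W) / emeasure M W)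
                 \<le> emeasure M (ipow f g k ` B) / emeasure M B
             \<and> emeasure M (ipow f g k ` B) / emeasure M B
                 \<le> ennreal K * (emeasure M (ipow f g k ` W) / emeasure M W)"
  shows "\<exists>L::real. L > 0 \<and> (\<forall>(n::int) (k::int) (\<phi>::'a \<Rightarrow> real).
           \<phi> \<in> borel_measurable M \<and> integrable M (\<lambda>x. \<bar>\<phi> x\<bar> powr p) \<longrightarrow>
             ennreal (1 / L) * (emeasure M (ipow f g k ` W) / emeasure M (ipow f g (k + n) ` W))
                 * (\<integral>\<^sup>+ x \<in> ipow f g (k + n) ` W. ennreal (\<bar>\<phi> x\<bar> powr p) \<partial>M)
               \<le> (\<integral>\<^sup>+ x \<in> ipow f g k ` W. ennreal (\<bar>\<phi> (ipow f g n x)\<bar> powr p) \<partial>M)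
           \<and> (\<integral>\<^sup>+ x \<in> ipow f g k ` W. ennreal (\<bar>\<phi> (ipow f g n x)\<bar> powr p) \<partial>M)
               \<le> ennreal L * (emeasure M (ipow f g k ` W) / emeasure M (ipow f g (k + n) ` W))
                 * (\<integral>\<^sup>+ x \<in> ipow f g (k + n) ` W. ennreal (\<bar>\<phi> x\<bar> powr p) \<partial>M))"
proof -
  obtain c1 where c1: "c1 > 0" "AE x in M. ennreal c1 \<le> RN_deriv M (distr M M g) x" using rn_f by blast
  obtain c2 where c2: "c2 > 0" "AE x in M. ennreal c2 \<le> RN_deriv M (distr M M f) x" using rn_finv by blast
  obtain K where K: "K > 0" and bdK: "\<forall>(k::int) B. B \<in> sets M \<longrightarrow> B \<subseteq> W \<longrightarrow> 0 < emeasure M B \<longrightarrow>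
               ennreal (1 / K) * (emeasure M (ipow f g k ` W) / emeasure M W)
                 \<le> emeasure M (ipow f g k ` B) / emeasure M B
             \<and> emeasure M (ipow f g k ` B) / emeasure M B
                 \<le> ennreal K * (emeasure M (ipow f g k ` W) / emeasure M W)" using bd by blast
  interpret sys3 M f g c1 c2 W K
  proof (intro sys3.intro sys2.intro sys.intro sys2_axioms.intro sys3_axioms.intro)
    show "f \<in> M \<rightarrow>\<^sub>M M" by (rule f_meas)
    show "g \<in> M \<rightarrow>\<^sub>M M" by (rule g_meas)
    show "\<And>x. x \<in> space M \<Longrightarrow> g (f x) = x" by (rule gf)
    show "\<And>x. x \<in> space M \<Longrightarrow> f (g x) = x" by (rule fg)
  qed (fact sf ac_f ac_finv c1 c2 W K bdK f_meas g_meas gf fg)+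
  show ?thesis
  proof (intro exI[of _ "K^2"] conjI allI impI)
    show "K^2 > 0" using K by simp
    fix n k :: int and \<phi> :: "'a \<Rightarrow> real"
    assume a: "\<phi> \<in> borel_measurable M \<and> integrable M (\<lambda>x. \<bar>\<phi> x\<bar> powr p)"
    have hm: "(\<lambda>x. ennreal (\<bar>\<phi> x\<bar> powr p)) \<in> borel_measurable M" using a borel_measurable_integrable[of M "\<lambda>x. \<bar>\<phi> x\<bar> powr p"] by simp
    note r = int_ineq[OF hm, of k n]
    show "ennreal (1 / K^2) * (emeasure M (ipow f g k ` W) / emeasure M (ipow f g (k + n) ` W))
                 * (\<integral>\<^sup>+ x \<in> ipow f g (k + n) ` W. ennreal (\<bar>\<phi> x\<bar> powr p) \<partial>M)
               \<le> (\<integral>\<^sup>+ x \<in> ipow f g k ` W. ennreal (\<bar>\<phi> (ipow f g n x)\<bar> powr p) \<partial>M)"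
      using r by blast
    show "(\<integral>\<^sup>+ x \<in> ipow f g k ` W. ennreal (\<bar>\<phi> (ipow f g n x)\<bar> powr p) \<partial>M)
               \<le> ennreal (K^2) * (emeasure M (ipow f g k ` W) / emeasure M (ipow f g (k + n) ` W))
                 * (\<integral>\<^sup>+ x \<in> ipow f g (k + n) ` W. ennreal (\<bar>\<phi> x\<bar> powr p) \<partial>M)"
      using r by blast
  qed
qed

end
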